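(* Let $R$ be a commutative ring with identity and $M$ a non-zero comultiplication $R$-module with $G'(M)$ non-null. Then the domination number satisfies $\gamma(G'(M))\le 2$. In particular, if $|\mathrm{Min}(M)|<\infty$, then $\gamma(G'(M))=2$.
   Context: An $R$-module $M$ is a comultiplication module if for every submodule $N$ of $M$ there is an ideal $I$ of $R$ with $N=\mathrm{Ann}_M(I)$. A submodule $N$ of $M$ is large if $N\cap L\neq 0$ for every non-zero submodule $L$ of $M$. $\mathrm{Min}(M)$ is the set of minimal submodules of $M$. The large sum graph $G'(M)$ has as vertex set the set of all non-zero non-large submodules of $M$, and two distinct vertices $N,K$ are adjacent iff $N+K$ is non-large in $M$. A set $S$ of vertices is dominating if every vertex lies in $S$ or is adjacent to a vertex of $S$; $\gamma(G)$ is the minimum cardinality of a dominating set. *)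

theory Defs
  imports "HOL-Algebra.Algebra" "HOL-Library.Extended_Nat"
begin

definition ann_mod :: "('a, 'c) ring_scheme \<Rightarrow> ('a, 'b, 'd) module_scheme \<Rightarrow> 'a set \<Rightarrow> 'b set" where
  "ann_mod R M I = {m \<in> carrier M. \<forall>r \<in> I. r \<odot>\<^bsub>M\<^esub> m = \<zero>\<^bsub>M\<^esub>}"

definition comultiplication_module :: "('a, 'c) ring_scheme \<Rightarrow> ('a, 'b, 'd) module_scheme \<Rightarrow> bool" where
  "comultiplication_module R M \<longleftrightarrow>
     (\<forall>N. submodule N R M \<longrightarrow> (\<exists>I. ideal I R \<and> N = ann_mod R M I))"

definition large_submodule :: "('a, 'c) ring_scheme \<Rightarrow> ('a, 'b, 'd) module_scheme \<Rightarrow> 'b set \<Rightarrow> bool" where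
  "large_submodule R M N \<longleftrightarrow> submodule N R M \<and>
     (\<forall>L. submodule L R M \<and> L \<noteq> {\<zero>\<^bsub>M\<^esub>} \<longrightarrow> N \<inter> L \<noteq> {\<zero>\<^bsub>M\<^esub>})"

definition min_submodules :: "('a, 'c) ring_scheme \<Rightarrow> ('a, 'b, 'd) module_scheme \<Rightarrow> 'b set set" where
  "min_submodules R M = {N. submodule N R M \<and> N \<noteq> {\<zero>\<^bsub>M\<^esub>} \<and>
     (\<forall>K. submodule K R M \<and> K \<subseteq> N \<and> K \<noteq> {\<zero>\<^bsub>M\<^esub>} \<longrightarrow> K = N)}"

definition lsg_vertices :: "('a, 'c) ring_scheme \<Rightarrow> ('a, 'b, 'd) module_scheme \<Rightarrow> 'b set set" where
  "lsg_vertices R M = {N. submodule N R M \<and> N \<noteq> {\<zero>\<^bsub>M\<^esub>} \<and> \<not> large_submodule R M N}"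

definition lsg_adj :: "('a, 'c) ring_scheme \<Rightarrow> ('a, 'b, 'd) module_scheme \<Rightarrow> 'b set \<Rightarrow> 'b set \<Rightarrow> bool" where
  "lsg_adj R M N K \<longleftrightarrow> N \<in> lsg_vertices R M \<and> K \<in> lsg_vertices R M \<and> N \<noteq> K \<and>
     \<not> large_submodule R M (N <+>\<^bsub>M\<^esub> K)"

definition lsg_non_null :: "('a, 'c) ring_scheme \<Rightarrow> ('a, 'b, 'd) module_scheme \<Rightarrow> bool" where
  "lsg_non_null R M \<longleftrightarrow> (\<exists>N K. lsg_adj R M N K)"

definition lsg_dominating :: "('a, 'c) ring_scheme \<Rightarrow> ('a, 'b, 'd) module_scheme \<Rightarrow> 'b set set \<Rightarrow> bool" where
  "lsg_dominating R M S \<longleftrightarrow> S \<subseteq> lsg_vertices R M \<and>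
     (\<forall>V \<in> lsg_vertices R M. V \<in> S \<or> (\<exists>W \<in> S. lsg_adj R M V W))"

definition lsg_domination_number :: "('a, 'c) ring_scheme \<Rightarrow> ('a, 'b, 'd) module_scheme \<Rightarrow> enat" where
  "lsg_domination_number R M =
     (INF S \<in> {S. lsg_dominating R M S}. (if finite S then enat (card S) else \<infinity>))"

end

theory Submission
  imports Defs
begin

context module
begin

lemma sm_zero: "submodule H R M \<Longrightarrow> \<zero>\<^bsub>M\<^esub> \<in> H"
  using submodule.axioms(1) subgroup.one_closed by fastforce

lemma sm_carr: "submodule H R M \<Longrightarrow> H \<subseteq> carrier M"
  using submoduleE(1) by blast

lemma sm_nz: "submodule H R M \<Longrightarrow> H \<noteq> {\<zero>\<^bsub>M\<^esub>} \<Longrightarrow> \<exists>x\<in>H. x \<noteq> \<zero>\<^bsub>M\<^esub>"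
  using sm_zero by blast

lemma sm_zero_sub: "submodule {\<zero>\<^bsub>M\<^esub>} R M"
  by (rule submoduleI) auto

lemma sm_int: "submodule A R M \<Longrightarrow> submodule B R M \<Longrightarrow> submodule (A \<inter> B) R M"
  apply (rule submoduleI)
  using submoduleE[of A] submoduleE[of B] sm_zero[of A] sm_zero[of B] by auto

lemma sm_sum_mem: "x \<in> A <+>\<^bsub>M\<^esub> B \<longleftrightarrow> (\<exists>a\<in>A. \<exists>b\<in>B. x = a \<oplus>\<^bsub>M\<^esub> b)"
  unfolding set_add_def' by auto

lemma sm_sum: "submodule A R M \<Longrightarrow> submodule B R M \<Longrightarrow> submodule (A <+>\<^bsub>M\<^esub> B) R M"
proof (rule submoduleI)
  assume a: "submodule A R M" and b: "submodule B R M"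
  note A = submoduleE[OF a] and B = submoduleE[OF b]
  show "A <+>\<^bsub>M\<^esub> B \<subseteq> carrier M"
    using A(1) B(1) by (auto simp: sm_sum_mem subset_iff)
  show "\<zero>\<^bsub>M\<^esub> \<in> A <+>\<^bsub>M\<^esub> B"
    unfolding sm_sum_mem using sm_zero[OF a] sm_zero[OF b] by force
  show "\<ominus>\<^bsub>M\<^esub> x \<in> A <+>\<^bsub>M\<^esub> B" if hx: "x \<in> A <+>\<^bsub>M\<^esub> B" for x
  proof -
    obtain p q where "p \<in> A" "q \<in> B" "x = p \<oplus>\<^bsub>M\<^esub> q" using hx by (auto simp: sm_sum_mem)
    moreover have "\<ominus>\<^bsub>M\<^esub> (p \<oplus>\<^bsub>M\<^esub> q) = \<ominus>\<^bsub>M\<^esub> p \<oplus>\<^bsub>M\<^esub> \<ominus>\<^bsub>M\<^esub> q"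
      using calculation A(1) B(1) by (meson M.minus_add subsetD)
    ultimately show ?thesis using A(3) B(3) by (auto simp: sm_sum_mem)
  qed
  show "x \<oplus>\<^bsub>M\<^esub> y \<in> A <+>\<^bsub>M\<^esub> B" if hx: "x \<in> A <+>\<^bsub>M\<^esub> B" and hy: "y \<in> A <+>\<^bsub>M\<^esub> B" for x y
  proof -
    obtain p q where pq: "p \<in> A" "q \<in> B" "x = p \<oplus>\<^bsub>M\<^esub> q" using hx by (auto simp: sm_sum_mem)
    obtain p' q' where pq': "p' \<in> A" "q' \<in> B" "y = p' \<oplus>\<^bsub>M\<^esub> q'" using hy by (auto simp: sm_sum_mem)
    have "x \<oplus>\<^bsub>M\<^esub> y = (p \<oplus>\<^bsub>M\<^esub> p') \<oplus>\<^bsub>M\<^esub> (q \<oplus>\<^bsub>M\<^esub> q')"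
      using pq pq' A(1) B(1) by (simp add: subset_iff M.a_ac)
    then show ?thesis unfolding sm_sum_mem using pq pq' A(5) B(5) by blast
  qed
  show "r \<odot>\<^bsub>M\<^esub> x \<in> A <+>\<^bsub>M\<^esub> B" if hr: "r \<in> carrier R" and hx: "x \<in> A <+>\<^bsub>M\<^esub> B" for r x
  proof -
    obtain p q where pq: "p \<in> A" "q \<in> B" "x = p \<oplus>\<^bsub>M\<^esub> q" using hx by (auto simp: sm_sum_mem)
    have "r \<odot>\<^bsub>M\<^esub> x = r \<odot>\<^bsub>M\<^esub> p \<oplus>\<^bsub>M\<^esub> r \<odot>\<^bsub>M\<^esub> q"
      using pq A(1) B(1) hr by (meson smult_r_distr subsetD)
    then show ?thesis unfolding sm_sum_mem using pq hr A(4) B(4) by blast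
  qed
qed


lemma sm_chain_union:
  assumes ne: "C \<noteq> {}" and sm: "\<And>P. P \<in> C \<Longrightarrow> submodule P R M"
    and ch: "\<And>P Q. P \<in> C \<Longrightarrow> Q \<in> C \<Longrightarrow> P \<subseteq> Q \<or> Q \<subseteq> P"
  shows "submodule (\<Union>C) R M"
proof (rule submoduleI)
  show "\<Union>C \<subseteq> carrier M" using sm sm_carr by blast
  show "\<zero>\<^bsub>M\<^esub> \<in> \<Union>C" using ne sm sm_zero by blast
  show "\<ominus>\<^bsub>M\<^esub> a \<in> \<Union>C" if "a \<in> \<Union>C" for a
    using that sm submoduleE(3) by blast
  show "a \<odot>\<^bsub>M\<^esub> x \<in> \<Union>C" if "a \<in> carrier R" "x \<in> \<Union>C" for a x
    using that sm submoduleE(4) by blast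
  show "a \<oplus>\<^bsub>M\<^esub> b \<in> \<Union>C" if hab: "a \<in> \<Union>C" "b \<in> \<Union>C" for a b
  proof -
    obtain P Q where "P \<in> C" "Q \<in> C" "a \<in> P" "b \<in> Q" using hab by blast
    then show ?thesis using ch[of P Q] sm submoduleE(5) by blast
  qed
qed

lemma comult_mem:
  assumes cm: "comultiplication_module R M" and A: "submodule A R M" and x: "x \<in> carrier M"
    and k: "\<And>r. r \<in> carrier R \<Longrightarrow> (\<forall>a\<in>A. r \<odot>\<^bsub>M\<^esub> a = \<zero>\<^bsub>M\<^esub>) \<Longrightarrow> r \<odot>\<^bsub>M\<^esub> x = \<zero>\<^bsub>M\<^esub>"
  shows "x \<in> A"
proof -
  obtain I where I: "ideal I R" "A = ann_mod R M I"
    using cm A unfolding comultiplication_module_def by blast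
  have Ic: "I \<subseteq> carrier R" using I(1) ideal.axioms(1) additive_subgroup.a_subset by blast
  have "\<forall>r\<in>I. r \<odot>\<^bsub>M\<^esub> x = \<zero>\<^bsub>M\<^esub>"
  proof
    fix r assume r: "r \<in> I"
    have "\<forall>a\<in>A. r \<odot>\<^bsub>M\<^esub> a = \<zero>\<^bsub>M\<^esub>" using I(2) r unfolding ann_mod_def by blast
    then show "r \<odot>\<^bsub>M\<^esub> x = \<zero>\<^bsub>M\<^esub>" using k r Ic by blast
  qed
  then show ?thesis using I(2) x unfolding ann_mod_def by blast
qed

lemma step_lemma:
  assumes cm: "comultiplication_module R M"
    and V: "submodule V R M" and A: "submodule A R M" and L: "submodule L R M"
    and VL: "V \<inter> L = {\<zero>\<^bsub>M\<^esub>}" and lg: "large_submodule R M (V <+>\<^bsub>M\<^esub> A)"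
    and L': "submodule L' R M" "L' \<subseteq> L" "L' \<noteq> {\<zero>\<^bsub>M\<^esub>}"
  shows "A \<inter> L' \<noteq> {\<zero>\<^bsub>M\<^esub>}"
proof -
  have "(V <+>\<^bsub>M\<^esub> A) \<inter> L' \<noteq> {\<zero>\<^bsub>M\<^esub>}" using lg L' unfolding large_submodule_def by blast
  moreover have "submodule ((V <+>\<^bsub>M\<^esub> A) \<inter> L') R M" using sm_int sm_sum V A L' by blast
  ultimately obtain l where l: "l \<in> V <+>\<^bsub>M\<^esub> A" "l \<in> L'" "l \<noteq> \<zero>\<^bsub>M\<^esub>" using sm_nz by blast
  obtain v a where va: "v \<in> V" "a \<in> A" "l = v \<oplus>\<^bsub>M\<^esub> a" using l(1) sm_sum_mem by blast
  have vc: "v \<in> carrier M" and ac: "a \<in> carrier M" using va V A sm_carr by blast+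
  have lc: "l \<in> carrier M" using l(2) L'(1) sm_carr by blast
  have "l \<in> A"
  proof (rule comult_mem[OF cm A lc])
    fix r assume r: "r \<in> carrier R" and ka: "\<forall>a\<in>A. r \<odot>\<^bsub>M\<^esub> a = \<zero>\<^bsub>M\<^esub>"
    have "r \<odot>\<^bsub>M\<^esub> l = r \<odot>\<^bsub>M\<^esub> v \<oplus>\<^bsub>M\<^esub> r \<odot>\<^bsub>M\<^esub> a" using va vc ac r smult_r_distr by blast
    also have "\<dots> = r \<odot>\<^bsub>M\<^esub> v" using ka va r vc by simp
    finally have e: "r \<odot>\<^bsub>M\<^esub> l = r \<odot>\<^bsub>M\<^esub> v" .
    have "r \<odot>\<^bsub>M\<^esub> l \<in> L" using l(2) L' r submoduleE(4) by blast
    moreover have "r \<odot>\<^bsub>M\<^esub> l \<in> V" using e va(1) V r submoduleE(4) by metis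
    ultimately show "r \<odot>\<^bsub>M\<^esub> l = \<zero>\<^bsub>M\<^esub>" using VL by blast
  qed
  then show ?thesis using l by blast
qed

lemma ub_lemma:
  assumes cm: "comultiplication_module R M"
    and A: "submodule A R M" and B: "submodule B R M" and AB: "A \<inter> B = {\<zero>\<^bsub>M\<^esub>}"
    and V: "submodule V R M" and nl: "\<not> large_submodule R M V"
    and lA: "large_submodule R M (V <+>\<^bsub>M\<^esub> A)" and lB: "large_submodule R M (V <+>\<^bsub>M\<^esub> B)"
  shows False
proof -
  obtain L where L: "submodule L R M" "L \<noteq> {\<zero>\<^bsub>M\<^esub>}" "V \<inter> L = {\<zero>\<^bsub>M\<^esub>}"
    using nl V unfolding large_submodule_def by blast
  have "A \<inter> L \<noteq> {\<zero>\<^bsub>M\<^esub>}" using step_lemma[OF cm V A L(1) L(3) lA L(1)] L by blast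
  moreover have sAL: "submodule (A \<inter> L) R M" using sm_int A L by blast
  ultimately have "B \<inter> (A \<inter> L) \<noteq> {\<zero>\<^bsub>M\<^esub>}" using step_lemma[OF cm V B L(1) L(3) lB sAL] by blast
  moreover have "\<zero>\<^bsub>M\<^esub> \<in> B \<inter> (A \<inter> L)" using sm_zero A B L(1) by blast
  ultimately show False using AB by blast
qed

lemma lb_lemma:
  assumes N: "submodule N R M" "N \<noteq> {\<zero>\<^bsub>M\<^esub>}" and nl: "\<not> large_submodule R M N"
  shows "\<exists>V. V \<in> lsg_vertices R M \<and> V \<noteq> N \<and> large_submodule R M (V <+>\<^bsub>M\<^esub> N)"
proof -
  define F where "F = {W. submodule W R M \<and> W \<inter> N = {\<zero>\<^bsub>M\<^esub>}}"
  have "{\<zero>\<^bsub>M\<^esub>} \<in> F" unfolding F_def using sm_zero_sub sm_zero[OF N(1)] by blast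
  then have "F \<noteq> {}" by blast
  moreover have "\<Union>C \<in> F" if "C \<noteq> {}" "subset.chain F C" for C
  proof -
    have CF: "C \<subseteq> F" and ch: "\<And>P Q. P \<in> C \<Longrightarrow> Q \<in> C \<Longrightarrow> P \<subseteq> Q \<or> Q \<subseteq> P"
      using that(2) unfolding subset_chain_def by blast+
    have "submodule (\<Union>C) R M" using sm_chain_union[OF that(1)] CF ch unfolding F_def by blast
    moreover have "\<Union>C \<inter> N = {\<zero>\<^bsub>M\<^esub>}" using CF that(1) unfolding F_def by blast
    ultimately show ?thesis unfolding F_def by blast
  qed
  ultimately obtain V where V: "V \<in> F" and mx: "\<And>P. P \<in> F \<Longrightarrow> V \<subseteq> P \<Longrightarrow> P = V"
    using subset_Zorn_nonempty[of F] by blast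
  have Vs: "submodule V R M" and VN: "V \<inter> N = {\<zero>\<^bsub>M\<^esub>}" using V unfolding F_def by blast+
  obtain L where L: "submodule L R M" "L \<noteq> {\<zero>\<^bsub>M\<^esub>}" "N \<inter> L = {\<zero>\<^bsub>M\<^esub>}"
    using nl N unfolding large_submodule_def by blast
  have "L \<in> F" using L unfolding F_def by blast
  have V0: "V \<noteq> {\<zero>\<^bsub>M\<^esub>}"
  proof
    assume "V = {\<zero>\<^bsub>M\<^esub>}"
    then have "V \<subseteq> L" using sm_zero[OF L(1)] by blast
    then show False using mx[OF \<open>L \<in> F\<close>] L(2) \<open>V = {\<zero>\<^bsub>M\<^esub>}\<close> by blast
  qed
  have Vnl: "\<not> large_submodule R M V"
    using VN N unfolding large_submodule_def by blast
  have VneN: "V \<noteq> N" using VN N(2) by blast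
  have "large_submodule R M (V <+>\<^bsub>M\<^esub> N)"
    unfolding large_submodule_def
  proof (intro conjI allI impI)
    show "submodule (V <+>\<^bsub>M\<^esub> N) R M" using sm_sum Vs N(1) by blast
    fix K assume K: "submodule K R M \<and> K \<noteq> {\<zero>\<^bsub>M\<^esub>}"
    show "(V <+>\<^bsub>M\<^esub> N) \<inter> K \<noteq> {\<zero>\<^bsub>M\<^esub>}"
    proof
      assume VNK: "(V <+>\<^bsub>M\<^esub> N) \<inter> K = {\<zero>\<^bsub>M\<^esub>}"
      have VKs: "submodule (V <+>\<^bsub>M\<^esub> K) R M" using sm_sum Vs K by blast
      have "(V <+>\<^bsub>M\<^esub> K) \<inter> N \<subseteq> {\<zero>\<^bsub>M\<^esub>}"
      proof
        fix x assume x: "x \<in> (V <+>\<^bsub>M\<^esub> K) \<inter> N"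
        obtain v k where vk: "v \<in> V" "k \<in> K" "x = v \<oplus>\<^bsub>M\<^esub> k" using x sm_sum_mem by blast
        have vc: "v \<in> carrier M" and kc: "k \<in> carrier M" using vk Vs K sm_carr by blast+
        have xN: "x \<in> N" using x by blast
        have "\<ominus>\<^bsub>M\<^esub> v \<in> V" using vk(1) Vs submoduleE(3) by blast
        have "\<ominus>\<^bsub>M\<^esub> v \<oplus>\<^bsub>M\<^esub> x = (\<ominus>\<^bsub>M\<^esub> v \<oplus>\<^bsub>M\<^esub> v) \<oplus>\<^bsub>M\<^esub> k"
          using vk(3) vc kc by (metis M.a_assoc M.a_inv_closed)
        also have "\<dots> = k" using vc kc by (simp add: M.l_neg)
        finally have "k = \<ominus>\<^bsub>M\<^esub> v \<oplus>\<^bsub>M\<^esub> x" by simp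
        then have "k \<in> V <+>\<^bsub>M\<^esub> N" using xN \<open>\<ominus>\<^bsub>M\<^esub> v \<in> V\<close> sm_sum_mem by blast
        then have "k = \<zero>\<^bsub>M\<^esub>" using VNK vk(2) by blast
        then have "x = v" using vk vc by simp
        then show "x \<in> {\<zero>\<^bsub>M\<^esub>}" using VN vk(1) xN by blast
      qed
      then have "V <+>\<^bsub>M\<^esub> K \<in> F"
        unfolding F_def using VKs sm_zero[OF VKs] sm_zero[OF N(1)] by blast
      moreover have "V \<subseteq> V <+>\<^bsub>M\<^esub> K"
      proof
        fix v assume "v \<in> V"
        then have "v = v \<oplus>\<^bsub>M\<^esub> \<zero>\<^bsub>M\<^esub>" using sm_carr[OF Vs] by auto
        then show "v \<in> V <+>\<^bsub>M\<^esub> K" using \<open>v \<in> V\<close> sm_zero K sm_sum_mem by blast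
      qed
      ultimately have "V <+>\<^bsub>M\<^esub> K = V" using mx by blast
      moreover have "K \<subseteq> V <+>\<^bsub>M\<^esub> K"
      proof
        fix k assume "k \<in> K"
        then have "k \<in> carrier M" using sm_carr K by blast
        then have "k = \<zero>\<^bsub>M\<^esub> \<oplus>\<^bsub>M\<^esub> k" by simp
        then show "k \<in> V <+>\<^bsub>M\<^esub> K" using \<open>k \<in> K\<close> sm_zero[OF Vs] sm_sum_mem by blast
      qed
      moreover have "V \<subseteq> V <+>\<^bsub>M\<^esub> N"
      proof
        fix v assume "v \<in> V"
        then have "v = v \<oplus>\<^bsub>M\<^esub> \<zero>\<^bsub>M\<^esub>" using sm_carr[OF Vs] by auto
        then show "v \<in> V <+>\<^bsub>M\<^esub> N" using \<open>v \<in> V\<close> sm_zero N(1) sm_sum_mem by blast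
      qed
      ultimately have "K \<subseteq> (V <+>\<^bsub>M\<^esub> N) \<inter> K" by blast
      then show False using VNK K by blast
    qed
  qed
  moreover have "V \<in> lsg_vertices R M" unfolding lsg_vertices_def using Vs V0 Vnl by blast
  ultimately show ?thesis using VneN by blast
qed

end

lemma dom_eq_2:
  fixes R :: "('a, 'c) ring_scheme" and M :: "('a, 'b, 'd) module_scheme"
  assumes "cring R" and md: "module R M"
    and cm: "comultiplication_module R M"
    and nn: "lsg_non_null R M"
  shows "lsg_domination_number R M = 2"
proof -
  interpret module R M by (rule md)
  obtain N K where "lsg_adj R M N K" using nn unfolding lsg_non_null_def by blast
  then have Nv: "N \<in> lsg_vertices R M" unfolding lsg_adj_def by blast
  then have N: "submodule N R M" "N \<noteq> {\<zero>\<^bsub>M\<^esub>}" "\<not> large_submodule R M N"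
    unfolding lsg_vertices_def by blast+
  obtain L where L: "submodule L R M" "L \<noteq> {\<zero>\<^bsub>M\<^esub>}" "N \<inter> L = {\<zero>\<^bsub>M\<^esub>}"
    using N unfolding large_submodule_def by blast
  have Lnl: "\<not> large_submodule R M L" using L N unfolding large_submodule_def by blast
  have Lv: "L \<in> lsg_vertices R M" unfolding lsg_vertices_def using L Lnl by blast
  have NL: "N \<noteq> L" using L N by blast
  have dom: "lsg_dominating R M {N, L}"
    unfolding lsg_dominating_def
  proof (intro conjI ballI)
    show "{N, L} \<subseteq> lsg_vertices R M" using Nv Lv by blast
    fix V assume Vv: "V \<in> lsg_vertices R M"
    show "V \<in> {N, L} \<or> (\<exists>W\<in>{N, L}. lsg_adj R M V W)"
    proof (cases "V \<in> {N, L}")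
      case False
      have V: "submodule V R M" "\<not> large_submodule R M V" using Vv unfolding lsg_vertices_def by blast+
      have "\<not> (large_submodule R M (V <+>\<^bsub>M\<^esub> N) \<and> large_submodule R M (V <+>\<^bsub>M\<^esub> L))"
        using ub_lemma[OF cm N(1) L(1) L(3) V] by blast
      then show ?thesis using False Vv Nv Lv unfolding lsg_adj_def by blast
    qed simp
  qed
  have c2: "(if finite {N, L} then enat (card {N, L}) else \<infinity>) = 2"
    using NL by (simp add: numeral_eq_enat)
  have up: "lsg_domination_number R M \<le> 2"
    unfolding lsg_domination_number_def using INF_lower[of "{N, L}" "Collect (lsg_dominating R M)" "\<lambda>S. if finite S then enat (card S) else \<infinity>"] dom c2
    by simp
  have lo: "2 \<le> (if finite S then enat (card S) else \<infinity>)" if S: "lsg_dominating R M S" for S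
  proof (cases "finite S")
    case True
    have "card S \<noteq> 0"
    proof
      assume "card S = 0"
      then have "S = {}" using True by simp
      then show False using S Nv unfolding lsg_dominating_def by blast
    qed
    moreover have "card S \<noteq> 1"
    proof
      assume "card S = 1"
      then obtain W where SW: "S = {W}" using card_1_singletonE by blast
      then have Wv: "W \<in> lsg_vertices R M" using S unfolding lsg_dominating_def by blast
      then have W: "submodule W R M" "W \<noteq> {\<zero>\<^bsub>M\<^esub>}" "\<not> large_submodule R M W"
        unfolding lsg_vertices_def by blast+
      obtain V where V: "V \<in> lsg_vertices R M" "V \<noteq> W" "large_submodule R M (V <+>\<^bsub>M\<^esub> W)"
        using lb_lemma[OF W] by blast
      then show False using S SW unfolding lsg_dominating_def lsg_adj_def by blast
    qed
    ultimately have "card S \<ge> 2" by linarith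
    then show ?thesis using True by (simp add: numeral_eq_enat)
  qed simp
  have "2 \<le> lsg_domination_number R M"
    unfolding lsg_domination_number_def by (rule INF_greatest) (use lo in blast)
  then show ?thesis using up by simp
qed

theorem theorem3p3:
  fixes R :: "('a, 'c) ring_scheme" and M :: "('a, 'b, 'd) module_scheme"
  assumes "cring R" and "module R M"
    and "carrier M \<noteq> {\<zero>\<^bsub>M\<^esub>}"
    and "comultiplication_module R M"
    and "lsg_non_null R M"
  shows "lsg_domination_number R M \<le> 2 \<and>
         (finite (min_submodules R M) \<longrightarrow> lsg_domination_number R M = 2)"
  using dom_eq_2[OF assms(1,2,4,5)] by simp

end
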